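(* Let $\mathcal{T}$ be an unrooted tree with leaf set $N=\{1,\dots,n\}$ ($n\ge 3$) in which every internal vertex has degree $3$, and let $\alpha_k\in\mathbb{R}$ be a weight on each edge $k\in E$. Then the Shapley value of the tree game $(N,v_{\mathcal T})$ is a linear function of the edge weights, $\varphi_i(N,v_{\mathcal T})=\sum_{k\in E}\mathbf{M}[i,k]\,\alpha_k$, and its coefficients are given by $$\mathbf{M}[i,k]=\frac{f(i,k)}{n\,c(i,k)}\qquad\text{for all } i\in N,\ k\in E.$$
   Context: An $n$-leaf tree here is an unrooted tree whose leaves are labeled by $N=\{1,\dots,n\}$ and whose internal vertices all have degree 3. Such a tree has $2n-3$ edges: the $n$ leaf edges, each incident to a leaf, and the $n-3$ internal edges $I_1,\dots,I_{n-3}$. Each edge $k\in E$ carries a real weight $\alpha_k$. The tree game $v_{\mathcal T}:2^N\to\mathbb{R}$ assigns to each $S\subseteq N$ the sum of the weights of the edges of the minimal subtree of $\mathcal T$ spanning the leaves in $S$. In particular $v_{\mathcal T}(\emptyset)=0$ and $v_{\mathcal T}(\{i\})=0$. The Shapley value of a cooperative game $(N,v)$ is $$\varphi_i(N,v)=\frac{1}{n!}\sum_{S\subseteq N,\ i\in S}(|S|-1)!\,(n-|S|)!\,\bigl(v(S)-v(S\setminus\{i\})\bigr).$$ Split counts: for a leaf $i$ and an edge $k$, removing $k$ splits $\mathcal T$ into two subtrees. $\mathcal C(i,k)$ is the set of leaves in the subtree containing $i$, and $\mathcal F(i,k)$ is the set of leaves in the other subtree. Their sizes are $c(i,k)=|\mathcal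 C(i,k)|$ and $f(i,k)=|\mathcal F(i,k)|$, so $c(i,k)+f(i,k)=n$. $\mathbf M$ is the $n\times(2n-3)$ matrix of the Shapley transformation. Its rows are indexed by leaves and its columns by edges, in the order leaf edges $1,\dots,n$ followed by internal edges $I_1,\dots,I_{n-3}$. *)

theory Defs
  imports Complex_Main
begin

definition conn :: "'v set set \<Rightarrow> 'v \<Rightarrow> 'v \<Rightarrow> bool" where
  "conn F a b \<longleftrightarrow> (a, b) \<in> {(x, y). {x, y} \<in> F}\<^sup>*"

definition degree :: "'v set set \<Rightarrow> 'v \<Rightarrow> nat" where
  "degree E v = card {e \<in> E. v \<in> e}"

text \<open>A (finite, unrooted) tree: a finite connected graph that is minimally connected,
  i.e. removing any edge disconnects its two endpoints (equivalently: acyclic).\<close>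
definition is_tree :: "'v set \<Rightarrow> 'v set set \<Rightarrow> bool" where
  "is_tree V E \<longleftrightarrow> finite V
     \<and> (\<forall>e\<in>E. \<exists>u w. u \<noteq> w \<and> u \<in> V \<and> w \<in> V \<and> e = {u, w})
     \<and> (\<forall>a\<in>V. \<forall>b\<in>V. conn E a b)
     \<and> (\<forall>e\<in>E. \<forall>u w. e = {u, w} \<longrightarrow> \<not> conn (E - {e}) u w)"

text \<open>Edge set of the minimal subtree spanning a set of vertices X: the smallest set of
  edges connecting all vertices of X (empty if |X| \<le> 1).\<close>
definition span_edges :: "'v set set \<Rightarrow> 'v set \<Rightarrow> 'v set set" where
  "span_edges E X = \<Inter> {F. F \<subseteq> E \<and> (\<forall>a\<in>X. \<forall>b\<in>X. conn F a b)}"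

definition tree_game :: "'v set set \<Rightarrow> ('v set \<Rightarrow> real) \<Rightarrow> (nat \<Rightarrow> 'v) \<Rightarrow> nat set \<Rightarrow> real" where
  "tree_game E \<alpha> leaf S = (\<Sum>k\<in>span_edges E (leaf ` S). \<alpha> k)"

definition shapley :: "nat set \<Rightarrow> (nat set \<Rightarrow> real) \<Rightarrow> nat \<Rightarrow> real" where
  "shapley N v i = (\<Sum>S\<in>{S. S \<subseteq> N \<and> i \<in> S}.
      fact (card S - 1) * fact (card N - card S) / fact (card N) * (v S - v (S - {i})))"

definition c_split :: "nat \<Rightarrow> 'v set set \<Rightarrow> (nat \<Rightarrow> 'v) \<Rightarrow> nat \<Rightarrow> 'v set \<Rightarrow> nat" where
  "c_split n E leaf i k = card {j \<in> {1..n}. conn (E - {k}) (leaf i) (leaf j)}"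

definition f_split :: "nat \<Rightarrow> 'v set set \<Rightarrow> (nat \<Rightarrow> 'v) \<Rightarrow> nat \<Rightarrow> 'v set \<Rightarrow> nat" where
  "f_split n E leaf i k = card {j \<in> {1..n}. \<not> conn (E - {k}) (leaf i) (leaf j)}"

definition M_entry :: "nat \<Rightarrow> 'v set set \<Rightarrow> (nat \<Rightarrow> 'v) \<Rightarrow> nat \<Rightarrow> 'v set \<Rightarrow> real" where
  "M_entry n E leaf i k = real (f_split n E leaf i k) / (real n * real (c_split n E leaf i k))"

end

theory Submission
  imports Defs
begin


lemma sum_pow_card:
  assumes "finite F"
  shows "(\<Sum>T\<in>Pow F. h (card T)) = (\<Sum>t\<le>card F. real (card F choose t) * (h t :: real))"
proof -
  have "(\<Sum>T\<in>Pow F. h (card T)) = (\<Sum>t\<le>card F. \<Sum>T\<in>{T. T \<in> Pow F \<and> card T = t}. h (card T))"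
    by (rule sum.group[symmetric]) (auto simp: assms card_mono)
  also have "\<dots> = (\<Sum>t\<le>card F. real (card F choose t) * h t)"
  proof (rule sum.cong[OF refl])
    fix t
    have "(\<Sum>T\<in>{T. T \<in> Pow F \<and> card T = t}. h (card T)) = (\<Sum>T\<in>{T. T \<subseteq> F \<and> card T = t}. h t)"
      by (rule sum.cong) auto
    also have "\<dots> = real (card {T. T \<subseteq> F \<and> card T = t}) * h t" by simp
    also have "card {T. T \<subseteq> F \<and> card T = t} = card F choose t" using n_subsets[OF assms] .
    finally show "(\<Sum>T\<in>{T. T \<in> Pow F \<and> card T = t}. h (card T)) = real (card F choose t) * h t" .
  qed
  finally show ?thesis .
qed

lemma alg1:
  fixes A B D E G :: real
  assumes "A \<noteq> 0" "B \<noteq> 0" "D \<noteq> 0"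
  shows "(G / (A * B)) * (A * E) = G * D * (E / (B * D))"
  using assms by (simp add: divide_simps)

lemma key_identity:
  fixes f c :: nat
  assumes "c \<ge> 1"
  shows "(\<Sum>t\<le>f. real (f choose t) * (fact t * fact (f + c - 1 - t))) = fact (f + c) / real c"
proof -
  have "(\<Sum>t\<le>f. real (f choose t) * (fact t * fact (f + c - 1 - t)))
      = (\<Sum>s\<le>f. real (f choose (f - s)) * (fact (f - s) * fact (f + c - 1 - (f - s))))"
    by (rule sum.reindex_bij_witness[where i="\<lambda>s. f - s" and j="\<lambda>t. f - t"]) auto
  also have "\<dots> = (\<Sum>s\<le>f. fact f * fact (c - 1) * real ((c - 1 + s) choose s))"
  proof (rule sum.cong[OF refl])
    fix s assume s: "s \<in> {..f}"
    then have sf: "s \<le> f" by simp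
    have e1: "f + c - 1 - (f - s) = c - 1 + s" using sf assms by simp
    have b1: "real (f choose (f - s)) = fact f / (fact (f - s) * fact s)"
      using binomial_fact[of "f - s" f] sf by simp
    have b2: "real ((c - 1 + s) choose s) = fact (c - 1 + s) / (fact s * fact (c - 1))"
      using binomial_fact[of s "c - 1 + s"] by simp
    show "real (f choose (f - s)) * (fact (f - s) * fact (f + c - 1 - (f - s))) = fact f * fact (c - 1) * real ((c - 1 + s) choose s)"
      unfolding e1 b1 b2 by (rule alg1) simp_all
  qed
  also have "\<dots> = fact f * fact (c - 1) * real (\<Sum>s\<le>f. (c - 1 + s) choose s)"
    by (simp add: sum_distrib_left)
  also have "(\<Sum>s\<le>f. (c - 1 + s) choose s) = (f + c) choose f"
    using sum_choose_lower[of "c - 1" f] assms by (simp add: add.commute[of f c])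
  also have "real ((f + c) choose f) = fact (f + c) / (fact f * fact c)"
    using binomial_fact[of f "f + c"] by simp
  also have "fact c = real c * fact (c - 1)"
    by (rule fact_reduce) (use assms in simp)
  finally have eq: "(\<Sum>t\<le>f. real (f choose t) * (fact t * fact (f + c - 1 - t)))
     = fact f * fact (c - 1) * (fact (f + c) / (fact f * (real c * fact (c - 1))))" .
  have "fact f * fact (c - 1) * (fact (f + c) / (fact f * (real c * fact (c - 1)))) = (fact (f + c) / real c :: real)"
    by (simp add: divide_simps)
  then show ?thesis using eq by simp
qed


lemma reindex_insert:
  assumes fin: "finite N" and iN: "i \<in> N"
  shows "(\<Sum>S\<in>{S. S \<subseteq> N \<and> i \<in> S}. (h (card S) (S - {i}) :: real))
       = (\<Sum>T\<in>Pow (N - {i}). h (card T + 1) T)"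
proof -
  have inj: "inj_on (insert i) (Pow (N - {i}))"
    unfolding inj_on_def by blast
  have img: "insert i ` Pow (N - {i}) = {S. S \<subseteq> N \<and> i \<in> S}"
  proof
    show "insert i ` Pow (N - {i}) \<subseteq> {S. S \<subseteq> N \<and> i \<in> S}" using iN by blast
    show "{S. S \<subseteq> N \<and> i \<in> S} \<subseteq> insert i ` Pow (N - {i})"
    proof
      fix S assume "S \<in> {S. S \<subseteq> N \<and> i \<in> S}"
      then have "S = insert i (S - {i})" "S - {i} \<in> Pow (N - {i})" by blast+
      then show "S \<in> insert i ` Pow (N - {i})" by (metis imageI)
    qed
  qed
  have "(\<Sum>S\<in>{S. S \<subseteq> N \<and> i \<in> S}. h (card S) (S - {i}))
      = (\<Sum>S\<in>insert i ` Pow (N - {i}). h (card S) (S - {i}))" by (simp only: img)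
  also have "\<dots> = (\<Sum>T\<in>Pow (N - {i}). h (card (insert i T)) (insert i T - {i}))"
    by (rule sum.reindex_cong[OF inj refl]) simp
  also have "\<dots> = (\<Sum>T\<in>Pow (N - {i}). h (card T + 1) T)"
  proof (rule sum.cong[OF refl])
    fix T assume T: "T \<in> Pow (N - {i})"
    then have "finite T" "i \<notin> T" using fin finite_subset by blast+
    then have "card (insert i T) = card T + 1" "insert i T - {i} = T" by simp_all
    then show "h (card (insert i T)) (insert i T - {i}) = h (card T + 1) T" by simp
  qed
  finally show ?thesis .
qed

definition gind :: "(nat \<Rightarrow> nat \<Rightarrow> bool) \<Rightarrow> nat set \<Rightarrow> real" where
  "gind R S = (if \<exists>a\<in>S. \<exists>b\<in>S. \<not> R a b then 1 else 0)"

lemma marg_lemma: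
  fixes R :: "nat \<Rightarrow> nat \<Rightarrow> bool"
  assumes rfl: "\<And>a. R a a" and sym: "\<And>a b. R a b \<Longrightarrow> R b a"
    and trn: "\<And>a b c. R a b \<Longrightarrow> R b c \<Longrightarrow> R a c"
    and two: "\<And>a b. a \<in> N \<Longrightarrow> b \<in> N \<Longrightarrow> \<not> R i a \<Longrightarrow> \<not> R i b \<Longrightarrow> R a b"
    and SN: "S \<subseteq> N" and iS: "i \<in> S"
  shows "gind R S - gind R (S - {i}) = (if S - {i} \<subseteq> {j\<in>N. \<not> R i j} \<and> S - {i} \<noteq> {} then 1 else 0)"
proof (cases "S - {i} \<subseteq> {j\<in>N. \<not> R i j} \<and> S - {i} \<noteq> {}")
  case True
  then obtain x where x: "x \<in> S" "\<not> R i x" by blast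
  then have "\<exists>a\<in>S. \<exists>b\<in>S. \<not> R a b" using iS by blast
  then have "gind R S = 1" unfolding gind_def by simp
  moreover have "gind R (S - {i}) = 0"
  proof -
    have "R a b" if "a \<in> S - {i}" "b \<in> S - {i}" for a b
    proof -
      have "a \<in> N" "b \<in> N" "\<not> R i a" "\<not> R i b" using that True by blast+
      then show ?thesis by (rule two)
    qed
    then have "\<not> (\<exists>a\<in>S - {i}. \<exists>b\<in>S - {i}. \<not> R a b)" by blast
    then show ?thesis unfolding gind_def by simp
  qed
  ultimately show ?thesis using True by simp
next
  case False
  show ?thesis
  proof (cases "\<exists>x\<in>S. \<not> R i x")
    case nx: False
    have allR: "R a b" if "a \<in> S" "b \<in> S" for a b
    proof -
      have "R i a" "R i b" using nx that by blast+
      then show ?thesis by (meson sym trn)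
    qed
    then have "\<not> (\<exists>a\<in>S. \<exists>b\<in>S. \<not> R a b)" by blast
    then have "gind R S = 0" unfolding gind_def by simp
    moreover have "\<not> (\<exists>a\<in>S - {i}. \<exists>b\<in>S - {i}. \<not> R a b)" using allR by blast
    then have "gind R (S - {i}) = 0" unfolding gind_def by simp
    ultimately show ?thesis using False by simp
  next
    case FF: True
    then obtain x where x: "x \<in> S" "\<not> R i x" by blast
    have xi: "x \<noteq> i" using x rfl by blast
    then have ne: "S - {i} \<noteq> {}" using x by blast
    then obtain y where y: "y \<in> S - {i}" "R i y" using False SN by blast
    have "\<not> R y x" using y(2) x(2) trn by metis
    then have "\<exists>a\<in>S - {i}. \<exists>b\<in>S - {i}. \<not> R a b" using x y xi by blast
    then have "gind R (S - {i}) = 1" unfolding gind_def by simp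
    moreover have "\<exists>a\<in>S. \<exists>b\<in>S. \<not> R a b" using x iS by blast
    then have "gind R S = 1" unfolding gind_def by simp
    ultimately show ?thesis using False by simp
  qed
qed

lemma shapley_core:
  fixes N :: "nat set" and R :: "nat \<Rightarrow> nat \<Rightarrow> bool"
  assumes fin: "finite N" and iN: "i \<in> N"
    and rfl: "\<And>a. R a a" and sym: "\<And>a b. R a b \<Longrightarrow> R b a"
    and trn: "\<And>a b c. R a b \<Longrightarrow> R b c \<Longrightarrow> R a c"
    and two: "\<And>a b. a \<in> N \<Longrightarrow> b \<in> N \<Longrightarrow> \<not> R i a \<Longrightarrow> \<not> R i b \<Longrightarrow> R a b"
  shows "shapley N (gind R) i
    = real (card {j\<in>N. \<not> R i j}) / (real (card N) * real (card {j\<in>N. R i j}))"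
proof -
  define F where "F = {j\<in>N. \<not> R i j}"
  define C where "C = {j\<in>N. R i j}"
  have NCF: "N = C \<union> F" "C \<inter> F = {}" unfolding C_def F_def by blast+
  have finF: "finite F" and finC: "finite C" using fin unfolding F_def C_def by simp_all
  have ncf: "card N = card F + card C" using NCF finF finC
    by (simp add: card_Un_disjoint)
  have "i \<in> C" using iN rfl unfolding C_def by blast
  then have c1: "card C \<ge> 1" using finC
    by (metis One_nat_def Suc_leI card_gt_0_iff empty_iff)
  have FN: "F \<subseteq> N - {i}" using rfl unfolding F_def by blast
  define w where "w = (\<lambda>s::nat. fact (s - 1) * fact (card N - s) / fact (card N) :: real)"
  have a1: "shapley N (gind R) i = (\<Sum>S\<in>{S. S \<subseteq> N \<and> i \<in> S}. w (card S) * (if S - {i} \<subseteq> F \<and> S - {i} \<noteq> {} then 1 else 0))"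
    unfolding shapley_def w_def F_def
    by (rule sum.cong[OF refl]) (simp add: marg_lemma[OF rfl sym trn two])
  have a2: "(\<Sum>S\<in>{S. S \<subseteq> N \<and> i \<in> S}. w (card S) * (if S - {i} \<subseteq> F \<and> S - {i} \<noteq> {} then 1 else 0))
     = (\<Sum>T\<in>Pow (N - {i}). w (card T + 1) * (if T \<subseteq> F \<and> T \<noteq> {} then 1 else 0))"
    by (rule reindex_insert[OF fin iN, where h="\<lambda>s T. w s * (if T \<subseteq> F \<and> T \<noteq> {} then 1 else 0)"])
  have a3a: "(\<Sum>T\<in>Pow (N - {i}). w (card T + 1) * (if T \<subseteq> F \<and> T \<noteq> {} then 1 else 0))
        = (\<Sum>T\<in>{T \<in> Pow (N - {i}). T \<subseteq> F \<and> T \<noteq> {}}. w (card T + 1))"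
    using fin by (subst sum.inter_filter) (auto intro: sum.cong)
  have a3b: "{T \<in> Pow (N - {i}). T \<subseteq> F \<and> T \<noteq> {}} = Pow F - {{}}" using FN by blast
  have e2: "(\<Sum>T\<in>Pow F - {{}}. w (card T + 1)) = (\<Sum>T\<in>Pow F. w (card T + 1)) - w 1"
    using finF by (simp add: sum_diff1)
  have e3: "(\<Sum>T\<in>Pow F. w (card T + 1)) = (\<Sum>t\<le>card F. real (card F choose t) * w (t + 1))"
    by (rule sum_pow_card[OF finF])
  have e4: "(\<Sum>t\<le>card F. real (card F choose t) * w (t + 1))
     = (\<Sum>t\<le>card F. real (card F choose t) * (fact t * fact (card F + card C - 1 - t))) / fact (card N)"
    unfolding w_def ncf by (simp add: sum_divide_distrib)
  have e5: "(\<Sum>t\<le>card F. real (card F choose t) * (fact t * fact (card F + card C - 1 - t))) / fact (card N) = 1 / real (card C)"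
    using key_identity[OF c1, of "card F"] ncf by simp
  have st1: "shapley N (gind R) i = 1 / real (card C) - w 1"
    using a1 a2 a3a a3b e2 e3 e4 e5 by simp
  have w1: "w 1 = 1 / real (card N)"
  proof -
    have "card N \<noteq> 0" using ncf c1 by simp
    then have "(fact (card N) :: real) = real (card N) * fact (card N - 1)" by (simp add: fact_reduce)
    then show ?thesis unfolding w_def using \<open>card N \<noteq> 0\<close> by simp
  qed
  have st2: "1 / real (card C) - 1 / real (card N) = real (card F) / (real (card N) * real (card C))"
  proof -
    have cn: "real (card C) \<noteq> 0" "real (card N) \<noteq> 0" using ncf c1 by auto
    have "real (card N) = real (card F) + real (card C)" using ncf by simp
    then show ?thesis using cn by (simp add: field_simps)
  qed
  have "shapley N (gind R) i = real (card F) / (real (card N) * real (card C))"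
    using st1 w1 st2 by simp
  then show ?thesis unfolding F_def C_def .
qed


lemma conn_refl: "conn F a a"
  unfolding conn_def by simp

lemma conn_trans: "conn F a b \<Longrightarrow> conn F b c \<Longrightarrow> conn F a c"
  unfolding conn_def by (rule rtrancl_trans)

lemma conn_sym: assumes "conn F a b" shows "conn F b a"
proof -
  let ?r = "{(x, y). {x, y} \<in> F}"
  have rc: "?r\<inverse> = ?r" by (auto simp: insert_commute)
  have "(a, b) \<in> ?r\<^sup>*" using assms unfolding conn_def by simp
  then have "(b, a) \<in> (?r\<inverse>)\<^sup>*" by (rule rtrancl_converseI)
  then show ?thesis unfolding conn_def rc by simp
qed

lemma conn_mono: assumes "conn F a b" "F \<subseteq> G" shows "conn G a b"
proof -
  have sub: "{(x, y). {x, y} \<in> F} \<subseteq> {(x, y). {x, y} \<in> G}"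
  proof
    fix p assume "p \<in> {(x, y). {x, y} \<in> F}"
    then show "p \<in> {(x, y). {x, y} \<in> G}" using assms(2) by (cases p) auto
  qed
  have "(a, b) \<in> {(x, y). {x, y} \<in> F}\<^sup>*" using assms(1) unfolding conn_def by simp
  then have "(a, b) \<in> {(x, y). {x, y} \<in> G}\<^sup>*" by (rule subsetD[OF rtrancl_mono[OF sub]])
  then show ?thesis unfolding conn_def by simp
qed

lemma tree_facts:
  assumes "is_tree V E"
  shows "finite V" "\<And>e. e \<in> E \<Longrightarrow> \<exists>u w. u \<noteq> w \<and> u \<in> V \<and> w \<in> V \<and> e = {u, w}"
    "\<And>a b. a \<in> V \<Longrightarrow> b \<in> V \<Longrightarrow> conn E a b"
  using assms unfolding is_tree_def by simp_all

lemma tree_split: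
  assumes tree: "is_tree V E" and k: "k \<in> E"
  obtains u w where "k = {u, w}" "\<And>x. x \<in> V \<Longrightarrow> conn (E - {k}) u x \<or> conn (E - {k}) w x"
proof -
  obtain u w where uw: "u \<noteq> w" "u \<in> V" "w \<in> V" "k = {u, w}"
    using tree_facts(2)[OF tree k] by (elim exE conjE)
  have main: "conn (E - {k}) u x \<or> conn (E - {k}) w x" if "x \<in> V" for x
  proof -
    have "conn E u x" using tree_facts(3)[OF tree uw(2) that] .
    then have "(u, x) \<in> {(x, y). {x, y} \<in> E}\<^sup>*" unfolding conn_def by simp
    then show ?thesis
    proof (induction rule: rtrancl_induct)
      case base
      then show ?case using conn_refl[of "E - {k}" u] by (rule disjI1)
    next
      case (step y z)
      then have yz: "{y, z} \<in> E" by simp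
      show ?case
      proof (cases "{y, z} = k")
        case True
        then have "z \<in> {u, w}" using uw(4) by auto
        then have "z = u \<or> z = w" by simp
        then show ?thesis
        proof
          assume "z = u" then show ?thesis using conn_refl[of "E - {k}" u] by simp
        next
          assume "z = w" then show ?thesis using conn_refl[of "E - {k}" w] by simp
        qed
      next
        case False
        then have "{y, z} \<in> E - {k}" using yz by simp
        then have yz': "conn (E - {k}) y z" unfolding conn_def by (simp add: r_into_rtrancl)
        from step.IH show ?thesis
        proof
          assume "conn (E - {k}) u y" then show ?thesis by (rule disjI1[OF conn_trans[OF _ yz']])
        next
          assume "conn (E - {k}) w y" then show ?thesis by (rule disjI2[OF conn_trans[OF _ yz']])
        qed
      qed
    qed
  qed
  show ?thesis by (rule that[OF uw(4) main])
qed

lemma tree_two: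
  assumes tree: "is_tree V E" and k: "k \<in> E" and V: "x \<in> V" "y \<in> V" "z \<in> V"
    and nxy: "\<not> conn (E - {k}) x y" and nxz: "\<not> conn (E - {k}) x z"
  shows "conn (E - {k}) y z"
proof -
  obtain u w where uw: "k = {u, w}" "\<And>x. x \<in> V \<Longrightarrow> conn (E - {k}) u x \<or> conn (E - {k}) w x"
    using tree_split[OF tree k] by metis
  let ?c = "conn (E - {k})"
  have gen: "?c y z" if cx: "?c p x" and cy: "?c p y \<or> ?c q y" and cz: "?c p z \<or> ?c q z" for p q
  proof -
    have npy: "\<not> ?c p y"
    proof
      assume "?c p y"
      then have "?c x y" by (rule conn_trans[OF conn_sym[OF cx]])
      then show False using nxy by simp
    qed
    have npz: "\<not> ?c p z"
    proof
      assume "?c p z"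
      then have "?c x z" by (rule conn_trans[OF conn_sym[OF cx]])
      then show False using nxz by simp
    qed
    have qy: "?c q y" using cy npy by simp
    have qz: "?c q z" using cz npz by simp
    show ?thesis by (rule conn_trans[OF conn_sym[OF qy] qz])
  qed
  have cx: "?c u x \<or> ?c w x" using uw(2) V(1) by blast
  have cy: "?c u y \<or> ?c w y" using uw(2) V(2) by blast
  have cz: "?c u z \<or> ?c w z" using uw(2) V(3) by blast
  from cx show ?thesis
  proof
    assume "?c u x" then show ?thesis using cy cz by (rule gen)
  next
    assume "?c w x"
    moreover have "?c w y \<or> ?c u y" using cy by blast
    moreover have "?c w z \<or> ?c u z" using cz by blast
    ultimately show ?thesis by (rule gen)
  qed
qed

lemma span_char:
  assumes conE: "\<forall>a\<in>X. \<forall>b\<in>X. conn E a b"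
  shows "span_edges E X = {k \<in> E. \<exists>a\<in>X. \<exists>b\<in>X. \<not> conn (E - {k}) a b}"
proof
  show "span_edges E X \<subseteq> {k \<in> E. \<exists>a\<in>X. \<exists>b\<in>X. \<not> conn (E - {k}) a b}"
  proof
    fix k assume kin0: "k \<in> span_edges E X"
    then have kin: "k \<in> \<Inter> {F. F \<subseteq> E \<and> (\<forall>a\<in>X. \<forall>b\<in>X. conn F a b)}"
      unfolding span_edges_def .
    have "E \<in> {F. F \<subseteq> E \<and> (\<forall>a\<in>X. \<forall>b\<in>X. conn F a b)}" using conE by simp
    then have kE: "k \<in> E" by (rule InterD[OF kin])
    have ex: "\<exists>a\<in>X. \<exists>b\<in>X. \<not> conn (E - {k}) a b"
    proof (rule ccontr)
      assume "\<not> (\<exists>a\<in>X. \<exists>b\<in>X. \<not> conn (E - {k}) a b)"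
      then have "\<forall>a\<in>X. \<forall>b\<in>X. conn (E - {k}) a b" by simp
      then have "E - {k} \<in> {F. F \<subseteq> E \<and> (\<forall>a\<in>X. \<forall>b\<in>X. conn F a b)}" by simp
      then have "k \<in> E - {k}" by (rule InterD[OF kin])
      then show False by simp
    qed
    show "k \<in> {k \<in> E. \<exists>a\<in>X. \<exists>b\<in>X. \<not> conn (E - {k}) a b}" using kE ex by simp
  qed
next
  show "{k \<in> E. \<exists>a\<in>X. \<exists>b\<in>X. \<not> conn (E - {k}) a b} \<subseteq> span_edges E X"
  proof
    fix k assume "k \<in> {k \<in> E. \<exists>a\<in>X. \<exists>b\<in>X. \<not> conn (E - {k}) a b}"
    then obtain a b where ab: "k \<in> E" "a \<in> X" "b \<in> X" "\<not> conn (E - {k}) a b" by auto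
    have "k \<in> \<Inter> {F. F \<subseteq> E \<and> (\<forall>a\<in>X. \<forall>b\<in>X. conn F a b)}"
    proof (rule InterI)
      fix F assume "F \<in> {F. F \<subseteq> E \<and> (\<forall>a\<in>X. \<forall>b\<in>X. conn F a b)}"
      then have F: "F \<subseteq> E" "conn F a b" using ab(2,3) by simp_all
      show "k \<in> F"
      proof (rule ccontr)
        assume "k \<notin> F"
        then have "F \<subseteq> E - {k}" using F(1) by auto
        with F(2) have "conn (E - {k}) a b" by (rule conn_mono)
        then show False using ab(4) by simp
      qed
    qed
    then show "k \<in> span_edges E X" unfolding span_edges_def .
  qed
qed

lemma shapley_lin:
  assumes finK: "finite K" and v: "\<And>S. S \<subseteq> N \<Longrightarrow> v S = (\<Sum>k\<in>K. a k * g k S)"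
  shows "shapley N v i = (\<Sum>k\<in>K. a k * shapley N (g k) i)"
proof -
  have "shapley N v i = (\<Sum>S\<in>{S. S \<subseteq> N \<and> i \<in> S}. \<Sum>k\<in>K. a k *
      (fact (card S - 1) * fact (card N - card S) / fact (card N) * (g k S - g k (S - {i}))))"
    unfolding shapley_def
  proof (rule sum.cong[OF refl])
    fix S assume "S \<in> {S. S \<subseteq> N \<and> i \<in> S}"
    then have "S \<subseteq> N" "S - {i} \<subseteq> N" by auto
    then have "v S - v (S - {i}) = (\<Sum>k\<in>K. a k * (g k S - g k (S - {i})))"
      using v by (simp add: sum_subtractf right_diff_distrib)
    then show "fact (card S - 1) * fact (card N - card S) / fact (card N) * (v S - v (S - {i}))
      = (\<Sum>k\<in>K. a k * (fact (card S - 1) * fact (card N - card S) / fact (card N) * (g k S - g k (S - {i}))))"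
      by (simp add: sum_distrib_left mult.left_commute)
  qed
  also have "\<dots> = (\<Sum>k\<in>K. \<Sum>S\<in>{S. S \<subseteq> N \<and> i \<in> S}. a k *
      (fact (card S - 1) * fact (card N - card S) / fact (card N) * (g k S - g k (S - {i}))))"
    by (rule sum.swap)
  also have "\<dots> = (\<Sum>k\<in>K. a k * shapley N (g k) i)"
    unfolding shapley_def by (simp add: sum_distrib_left)
  finally show ?thesis .
qed

theorem theorem4:
  fixes V :: "'v set" and E :: "'v set set" and leaf :: "nat \<Rightarrow> 'v"
    and n :: nat and \<alpha> :: "'v set \<Rightarrow> real"
  assumes "n \<ge> 3"
    and "is_tree V E"
    and "bij_betw leaf {1..n} {v \<in> V. degree E v = 1}"
    and "\<forall>v\<in>V. degree E v \<noteq> 1 \<longrightarrow> degree E v = 3"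
  shows "\<forall>i\<in>{1..n}. shapley {1..n} (tree_game E \<alpha> leaf) i
           = (\<Sum>k\<in>E. M_entry n E leaf i k * \<alpha> k)"
proof
  fix i assume iN: "i \<in> {1..n}"
  have tree: "is_tree V E" by (rule assms(2))
  have finV: "finite V" by (rule tree_facts(1)[OF tree])
  have EV: "E \<subseteq> Pow V"
  proof
    fix e assume "e \<in> E"
    then obtain u w where "u \<in> V" "w \<in> V" "e = {u, w}"
      using tree_facts(2)[OF tree] by metis
    then show "e \<in> Pow V" by simp
  qed
  have finE: "finite E" by (rule finite_subset[OF EV]) (simp add: finV)
  have img: "leaf ` {1..n} = {v \<in> V. degree E v = 1}"
    using assms(3) by (rule bij_betw_imp_surj_on)
  have leafV: "leaf j \<in> V" if "j \<in> {1..n}" for j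
  proof -
    have "leaf j \<in> leaf ` {1..n}" using that by (rule imageI)
    then show ?thesis unfolding img by simp
  qed
  have connE: "conn E (leaf a) (leaf b)" if "a \<in> {1..n}" "b \<in> {1..n}" for a b
    using tree_facts(3)[OF tree leafV[OF that(1)] leafV[OF that(2)]] .
  define R where "R = (\<lambda>k a b. conn (E - {k}) (leaf a) (leaf b))"
  have game: "tree_game E \<alpha> leaf S = (\<Sum>k\<in>E. \<alpha> k * gind (R k) S)" if SN: "S \<subseteq> {1..n}" for S
  proof -
    have "\<forall>a\<in>leaf ` S. \<forall>b\<in>leaf ` S. conn E a b"
    proof (intro ballI)
      fix a b assume "a \<in> leaf ` S" "b \<in> leaf ` S"
      then obtain a' b' where ab': "a' \<in> S" "b' \<in> S" "a = leaf a'" "b = leaf b'" by blast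
      have "a' \<in> {1..n}" "b' \<in> {1..n}" using ab'(1,2) SN by (simp_all add: subset_iff)
      then have "conn E (leaf a') (leaf b')" by (rule connE)
      then show "conn E a b" using ab'(3,4) by simp
    qed
    then have "span_edges E (leaf ` S) = {k \<in> E. \<exists>a\<in>leaf ` S. \<exists>b\<in>leaf ` S. \<not> conn (E - {k}) a b}"
      by (rule span_char)
    also have "\<dots> = {k \<in> E. \<exists>a\<in>S. \<exists>b\<in>S. \<not> R k a b}" unfolding R_def by simp
    finally have sp: "span_edges E (leaf ` S) = {k \<in> E. \<exists>a\<in>S. \<exists>b\<in>S. \<not> R k a b}" .
    have "tree_game E \<alpha> leaf S = (\<Sum>k\<in>{k \<in> E. \<exists>a\<in>S. \<exists>b\<in>S. \<not> R k a b}. \<alpha> k)"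
      unfolding tree_game_def sp ..
    also have "\<dots> = (\<Sum>k\<in>E. if \<exists>a\<in>S. \<exists>b\<in>S. \<not> R k a b then \<alpha> k else 0)"
      by (rule sum.inter_filter[OF finE])
    also have "\<dots> = (\<Sum>k\<in>E. \<alpha> k * gind (R k) S)"
      unfolding gind_def by (rule sum.cong) simp_all
    finally show ?thesis .
  qed
  have "shapley {1..n} (tree_game E \<alpha> leaf) i = (\<Sum>k\<in>E. \<alpha> k * shapley {1..n} (gind (R k)) i)"
    by (rule shapley_lin[OF finE game])
  also have "\<dots> = (\<Sum>k\<in>E. M_entry n E leaf i k * \<alpha> k)"
  proof (rule sum.cong[OF refl])
    fix k assume k: "k \<in> E"
    have "shapley {1..n} (gind (R k)) i
      = real (card {j\<in>{1..n}. \<not> R k i j}) / (real (card {1..n}) * real (card {j\<in>{1..n}. R k i j}))"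
    proof (rule shapley_core)
      show "finite {1..n}" by simp
      show "i \<in> {1..n}" by (rule iN)
      show "\<And>a. R k a a" unfolding R_def by (rule conn_refl)
      show "\<And>a b. R k a b \<Longrightarrow> R k b a" unfolding R_def by (rule conn_sym)
      show "\<And>a b c. R k a b \<Longrightarrow> R k b c \<Longrightarrow> R k a c" unfolding R_def by (rule conn_trans)
      show "\<And>a b. a \<in> {1..n} \<Longrightarrow> b \<in> {1..n} \<Longrightarrow> \<not> R k i a \<Longrightarrow> \<not> R k i b \<Longrightarrow> R k a b"
      proof -
        fix a b assume ab: "a \<in> {1..n}" "b \<in> {1..n}" "\<not> R k i a" "\<not> R k i b"
        show "R k a b" unfolding R_def
          by (rule tree_two[OF tree k leafV[OF iN] leafV[OF ab(1)] leafV[OF ab(2)]])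
             (use ab in \<open>simp_all add: R_def\<close>)
      qed
    qed
    then show "\<alpha> k * shapley {1..n} (gind (R k)) i = M_entry n E leaf i k * \<alpha> k"
      unfolding M_entry_def f_split_def c_split_def R_def by simp
  qed
  finally show "shapley {1..n} (tree_game E \<alpha> leaf) i = (\<Sum>k\<in>E. M_entry n E leaf i k * \<alpha> k)" .
qed

end
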